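(* Let $\alpha>1$, $\delta\in(0,\alpha-1)$, $\tau\in(0,\alpha-1-\delta]$, $d\in\mathbb N$, $1\ge\gamma_1\ge\dots\ge\gamma_d>0$, and $g\in\mathcal A_{\alpha,\boldsymbol\gamma,d}$. Let $\boldsymbol x_1,\dots,\boldsymbol x_N\in[0,1]^d$, $c_1,\dots,c_N\in\mathbb R$. Let $L$ be a prime and $\mathcal Z=\{\boldsymbol z_0,\dots,\boldsymbol z_{L-1}\}$ a rank-1 lattice point set of size $L$ satisfying $e(H_{\beta,\boldsymbol\gamma,d},\mathcal Z)\le C_{\boldsymbol\gamma,d}(\beta,\tau')L^{-\beta+\tau'}$ for all $\tau'\in(0,\beta-\frac12]$, where $\beta=\alpha-\frac12-\delta$. Then for every $\nu>1$, with $K=K^\alpha_{\nu,\boldsymbol\gamma,d}$, $$\Big|\frac1N\sum_{n=1}^Nc_ng(\boldsymbol x_n)-\frac1L\sum_{\ell=0}^{L-1}g(\boldsymbol z_\ell)\phi_K(\boldsymbol z_\ell)\Big|\le\mathrm{err}_1(g,\mathcal C)+\mathrm{err}_2(g,\mathcal C)\le\|g\|_{\mathcal A_{\alpha,\boldsymbol\gamma,d}}\Big[\frac{1}{\sqrt\nu}+\frac{\sqrt\nu}{L^{\alpha-\frac12-\delta-\tau}}c_{\alpha,\boldsymbol\gamma,d}\,\zeta_{\delta,d}\,C_{\boldsymbol\gamma,d}\big(\alpha-\tfrac12-\delta,\tau\big)\Big]\overline\mu_N.$$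
   Context: For $\beta>0$, $\gamma>0$, $h\in\mathbb Z$: $r_\beta(\gamma,h)=\max(|h|^{2\beta}/\gamma,1)$, $r_\beta(\boldsymbol\gamma,\boldsymbol k)=\prod_{j=1}^dr_\beta(\gamma_j,k_j)$. $\omega_{\boldsymbol k}(\boldsymbol x)=\exp(2\pi i\,\boldsymbol k\cdot\boldsymbol x)$, $\widehat f_{\boldsymbol k}=\int_{[0,1]^d}f\,\overline{\omega_{\boldsymbol k}}$. Weighted Wiener algebra $\mathcal A_{\alpha,\boldsymbol\gamma,d}=\{f\in L_1([0,1]^d):\|f\|_{\mathcal A_{\alpha,\boldsymbol\gamma,d}}=\sum_{\boldsymbol k}\sqrt{r_\alpha(\boldsymbol\gamma,\boldsymbol k)}|\widehat f_{\boldsymbol k}|<\infty\}$ (functions identified with their uniformly convergent Fourier series). Weighted Korobov space ($\beta>1/2$): $H_{\beta,\boldsymbol\gamma,d}=\{f\in L_2:\|f\|_{H_{\beta,\boldsymbol\gamma,d}}=(\sum_{\boldsymbol k}r_\beta(\boldsymbol\gamma,\boldsymbol k)|\widehat f_{\boldsymbol k}|^2)^{1/2}<\infty\}$. Weighted continuous hyperbolic cross: $K^\alpha_{\nu,\boldsymbol\gamma,d}=\{\boldsymbol k\in\mathbb Z^d:r_\alpha(\boldsymbol\gamma,\boldsymbol k)\le\nu\}$. For finite $K$: $\phi_K(\boldsymbol x)=\sum_{\boldsymbol k\in K}\check\phi_{\boldsymbol k}\overline{\omega_{\boldsymbol k}(\boldsymbol x)}$, $\check\phi_{\boldsymbol k}=\frac1N\sum_nc_n\omega_{\boldsymbol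 k}(\boldsymbol x_n)$; $\mathcal C=(c_n)_n$; $\mathrm{err}_1(g,\mathcal C)=|\frac1N\sum_nc_ng(\boldsymbol x_n)-\int_{[0,1]^d}g\phi_K|$ and $\mathrm{err}_2(g,\mathcal C)=|\int_{[0,1]^d}g\phi_K-\frac1L\sum_{\ell=0}^{L-1}(g\phi_K)(\boldsymbol z_\ell)|$. A rank-1 lattice point set of size $L$ with generating vector $\mathfrak g\in\{1,\dots,L-1\}^d$ is $\{\boldsymbol z_\ell=(\ell\mathfrak g/L)\bmod1:\ell=0,\dots,L-1\}$ (componentwise fractional part). Worst-case error: $e(H_{\beta,\boldsymbol\gamma,d},\mathcal Z)=\sup_{\|f\|_{H_{\beta,\boldsymbol\gamma,d}}\le1}|\int_{[0,1]^d}f-\frac1L\sum_\ell f(\boldsymbol z_\ell)|$. Constants: $C_{\boldsymbol\gamma,d}(\beta,\tau)=2^{\beta-\tau}\prod_{j=1}^d[1+2\gamma_j^{1/(2(\beta-\tau))}\zeta(\frac{\beta}{\beta-\tau})]^{\beta-\tau}$; $\overline\mu_N=\frac1N\sum_n|c_n|$; $c_{\alpha,\boldsymbol\gamma,d}=\sqrt{\prod_j\max(1,2^{2\alpha}\gamma_j)}$; $\zeta_{\delta,d}=[1+2\zeta(1+2\delta)]^{d/2}$, $\zeta$ the Riemann zeta function. *)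

theory Defs
  imports "HOL-Analysis.Analysis"
begin

text \<open>Dimension d is the cardinality of the finite (linearly ordered) index type 'n.
  Points of [0,1]^d are elements of real^'n, frequencies are elements of int^'n.\<close>

definition rzeta :: "real \<Rightarrow> real" where
  "rzeta s = (\<Sum>n. 1 / real (Suc n) powr s)"

definition r1 :: "real \<Rightarrow> real \<Rightarrow> int \<Rightarrow> real" where
  "r1 \<beta> \<gamma> h = max (\<bar>real_of_int h\<bar> powr (2 * \<beta>) / \<gamma>) 1"

definition rw :: "real \<Rightarrow> ('n::finite \<Rightarrow> real) \<Rightarrow> int^'n \<Rightarrow> real" where
  "rw \<beta> \<gamma> k = (\<Prod>j\<in>UNIV. r1 \<beta> (\<gamma> j) (k $ j))"

definition omega :: "int^'n::finite \<Rightarrow> real^'n \<Rightarrow> complex" where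
  "omega k x = exp (2 * complex_of_real pi * \<i> *
                    complex_of_real (\<Sum>j\<in>UNIV. real_of_int (k $ j) * x $ j))"

definition unit_cube :: "(real^'n::finite) set" where
  "unit_cube = cbox 0 One"

definition fcoeff :: "(real^'n::finite \<Rightarrow> complex) \<Rightarrow> int^'n \<Rightarrow> complex" where
  "fcoeff f k = integral unit_cube (\<lambda>x. f x * cnj (omega k x))"

definition wiener_space :: "real \<Rightarrow> ('n::finite \<Rightarrow> real) \<Rightarrow> (real^'n \<Rightarrow> complex) set" where
  "wiener_space \<alpha> \<gamma> = {f. f absolutely_integrable_on unit_cube \<and>
      (\<lambda>k. sqrt (rw \<alpha> \<gamma> k) * cmod (fcoeff f k)) summable_on UNIV \<and>
      (\<forall>x\<in>unit_cube. f x = (\<Sum>\<^sub>\<infinity>k. fcoeff f k * omega k x))}"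

definition wiener_norm :: "real \<Rightarrow> ('n::finite \<Rightarrow> real) \<Rightarrow> (real^'n \<Rightarrow> complex) \<Rightarrow> real" where
  "wiener_norm \<alpha> \<gamma> f = (\<Sum>\<^sub>\<infinity>k. sqrt (rw \<alpha> \<gamma> k) * cmod (fcoeff f k))"

text \<open>Weighted Korobov space (beta > 1/2): L2 functions with finite weighted norm,
  identified with their (absolutely convergent) Fourier series.\<close>
definition korobov_space :: "real \<Rightarrow> ('n::finite \<Rightarrow> real) \<Rightarrow> (real^'n \<Rightarrow> complex) set" where
  "korobov_space \<beta> \<gamma> = {f. f absolutely_integrable_on unit_cube \<and>
      (\<lambda>x. (cmod (f x))^2) integrable_on unit_cube \<and>
      (\<lambda>k. rw \<beta> \<gamma> k * (cmod (fcoeff f k))^2) summable_on UNIV \<and>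
      (\<forall>x\<in>unit_cube. f x = (\<Sum>\<^sub>\<infinity>k. fcoeff f k * omega k x))}"

definition korobov_norm :: "real \<Rightarrow> ('n::finite \<Rightarrow> real) \<Rightarrow> (real^'n \<Rightarrow> complex) \<Rightarrow> real" where
  "korobov_norm \<beta> \<gamma> f = sqrt (\<Sum>\<^sub>\<infinity>k. rw \<beta> \<gamma> k * (cmod (fcoeff f k))^2)"

definition lattice_pt :: "nat \<Rightarrow> nat^'n::finite \<Rightarrow> nat \<Rightarrow> real^'n" where
  "lattice_pt L gv l = (\<chi> j. frac (real l * real (gv $ j) / real L))"

definition wce :: "real \<Rightarrow> ('n::finite \<Rightarrow> real) \<Rightarrow> nat \<Rightarrow> (nat \<Rightarrow> real^'n) \<Rightarrow> ereal" where
  "wce \<beta> \<gamma> L z = (SUP f\<in>{f \<in> korobov_space \<beta> \<gamma>. korobov_norm \<beta> \<gamma> f \<le> 1}.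
      ereal (cmod (integral unit_cube f - (1 / of_nat L) * (\<Sum>l<L. f (z l)))))"

definition hyp_cross :: "real \<Rightarrow> real \<Rightarrow> ('n::finite \<Rightarrow> real) \<Rightarrow> (int^'n) set" where
  "hyp_cross \<alpha> \<nu> \<gamma> = {k. rw \<alpha> \<gamma> k \<le> \<nu>}"

definition phi_check :: "nat \<Rightarrow> (nat \<Rightarrow> real) \<Rightarrow> (nat \<Rightarrow> real^'n::finite) \<Rightarrow> int^'n \<Rightarrow> complex" where
  "phi_check N c x k = (1 / of_nat N) * (\<Sum>n=1..N. complex_of_real (c n) * omega k (x n))"

definition phiK :: "(int^'n::finite) set \<Rightarrow> nat \<Rightarrow> (nat \<Rightarrow> real) \<Rightarrow> (nat \<Rightarrow> real^'n) \<Rightarrow> real^'n \<Rightarrow> complex" where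
  "phiK K N c x y = (\<Sum>k\<in>K. phi_check N c x k * cnj (omega k y))"

definition err1 :: "(real^'n::finite \<Rightarrow> complex) \<Rightarrow> (int^'n) set \<Rightarrow> nat \<Rightarrow> (nat \<Rightarrow> real) \<Rightarrow> (nat \<Rightarrow> real^'n) \<Rightarrow> real" where
  "err1 g K N c x = cmod ((1 / of_nat N) * (\<Sum>n=1..N. complex_of_real (c n) * g (x n))
      - integral unit_cube (\<lambda>y. g y * phiK K N c x y))"

definition err2 :: "(real^'n::finite \<Rightarrow> complex) \<Rightarrow> (int^'n) set \<Rightarrow> nat \<Rightarrow> (nat \<Rightarrow> real) \<Rightarrow> (nat \<Rightarrow> real^'n) \<Rightarrow> nat \<Rightarrow> (nat \<Rightarrow> real^'n) \<Rightarrow> real" where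
  "err2 g K N c x L z = cmod (integral unit_cube (\<lambda>y. g y * phiK K N c x y)
      - (1 / of_nat L) * (\<Sum>l<L. g (z l) * phiK K N c x (z l)))"

definition Cconst :: "('n::finite \<Rightarrow> real) \<Rightarrow> real \<Rightarrow> real \<Rightarrow> real" where
  "Cconst \<gamma> \<beta> \<tau> = 2 powr (\<beta> - \<tau>) *
     (\<Prod>j\<in>UNIV. (1 + 2 * \<gamma> j powr (1 / (2 * (\<beta> - \<tau>))) * rzeta (\<beta> / (\<beta> - \<tau>))) powr (\<beta> - \<tau>))"

definition mu_bar :: "nat \<Rightarrow> (nat \<Rightarrow> real) \<Rightarrow> real" where
  "mu_bar N c = (1 / real N) * (\<Sum>n=1..N. \<bar>c n\<bar>)"

definition c_const :: "real \<Rightarrow> ('n::finite \<Rightarrow> real) \<Rightarrow> real" where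
  "c_const \<alpha> \<gamma> = sqrt (\<Prod>j\<in>UNIV. max 1 (2 powr (2 * \<alpha>) * \<gamma> j))"

definition zeta_const :: "real \<Rightarrow> nat \<Rightarrow> real" where
  "zeta_const \<delta> d = (1 + 2 * rzeta (1 + 2 * \<delta>)) powr (real d / 2)"

end

theory Submission
  imports Defs
begin


lemma omega_add: "omega (a + b) x = omega a x * omega b x"
  unfolding omega_def
  by (simp add: sum.distrib distrib_right distrib_left exp_add[symmetric] algebra_simps)

lemma cnj_exp_aux: "cnj (exp (2 * complex_of_real pi * \<i> * complex_of_real r)) =
   exp (2 * complex_of_real pi * \<i> * complex_of_real (- r))"
  by (simp add: exp_cnj)

lemma omega_cnj: "cnj (omega k x) = omega (-k) x"
  unfolding omega_def cnj_exp_aux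
  by (simp add: sum_negf[symmetric])

lemma norm_omega[simp]: "norm (omega k x) = 1"
  unfolding omega_def by (simp add: norm_exp_eq_Re)

lemma cont_omega: "continuous_on S (omega k)"
  unfolding omega_def by (intro continuous_intros)

lemma cube_leb: "unit_cube \<in> sets lebesgue"
  unfolding unit_cube_def by simp

lemma abs_int_mult_bounded:
  fixes g :: "real^'n::finite \<Rightarrow> complex"
  assumes g: "g absolutely_integrable_on unit_cube"
    and c: "continuous_on unit_cube h" and b: "\<And>y. y \<in> unit_cube \<Longrightarrow> norm (h y) \<le> B"
  shows "(\<lambda>y. g y * h y) absolutely_integrable_on unit_cube"
proof -
  have "(\<lambda>y. h y * g y) absolutely_integrable_on unit_cube"
    apply (rule absolutely_integrable_bounded_measurable_product[OF bilinear_times])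
    using continuous_imp_measurable_on_sets_lebesgue[OF c cube_leb] apply simp
    apply (rule cube_leb)
    using b apply (auto simp: bounded_iff)
    using g by simp
  then show ?thesis by (simp add: mult.commute)
qed

lemma r1_ge1: "1 \<le> r1 b g h" unfolding r1_def by simp

lemma rw_ge1: "1 \<le> rw b g k" unfolding rw_def by (rule prod_ge_1) (simp add: r1_ge1)

lemma rw_pos[simp]: "0 < rw b g k" using rw_ge1[of b g k] by simp
lemma rw_nonneg[simp]: "0 \<le> rw b g k" using rw_ge1[of b g k] by simp

lemma infsum_finsum:
  fixes f :: "'k \<Rightarrow> 'a \<Rightarrow> 'b::{topological_comm_monoid_add, t2_space}"
  assumes "finite K" "\<And>k. k \<in> K \<Longrightarrow> f k summable_on A"
  shows "(\<lambda>x. \<Sum>k\<in>K. f k x) summable_on A \<and> infsum (\<lambda>x. \<Sum>k\<in>K. f k x) A = (\<Sum>k\<in>K. infsum (f k) A)"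
  using assms
proof (induction K rule: finite_induct)
  case empty then show ?case by simp
next
  case (insert a F)
  then have s: "(\<lambda>x. \<Sum>k\<in>F. f k x) summable_on A" and e: "infsum (\<lambda>x. \<Sum>k\<in>F. f k x) A = (\<Sum>k\<in>F. infsum (f k) A)"
    by auto
  have fa: "f a summable_on A" using insert by auto
  show ?case using insert(1,2) summable_on_add[OF fa s] infsum_add[OF fa s] e by simp
qed

lemma wiener_facts:
  assumes g: "g \<in> wiener_space \<alpha> \<gamma>"
  shows "(\<lambda>k. cmod (fcoeff g k)) summable_on UNIV"
    and "(\<lambda>k. sqrt (rw \<alpha> \<gamma> k) * cmod (fcoeff g k)) summable_on UNIV"
    and "\<And>y. y \<in> unit_cube \<Longrightarrow> g y = (\<Sum>\<^sub>\<infinity>k. fcoeff g k * omega k y)"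
    and "\<And>y. (\<lambda>k. norm (fcoeff g k * omega k y)) summable_on UNIV"
    and "\<And>y. (\<lambda>k. fcoeff g k * omega k y) summable_on UNIV"
    and "\<And>y. y \<in> unit_cube \<Longrightarrow> norm (g y) \<le> (\<Sum>\<^sub>\<infinity>k. cmod (fcoeff g k))"
    and "g absolutely_integrable_on unit_cube"
proof -
  show s2: "(\<lambda>k. sqrt (rw \<alpha> \<gamma> k) * cmod (fcoeff g k)) summable_on UNIV"
    using g unfolding wiener_space_def by auto
  show s1: "(\<lambda>k. cmod (fcoeff g k)) summable_on UNIV"
    apply (rule summable_on_comparison_test[OF s2])
  proof -
    fix k
    have "1 \<le> sqrt (rw \<alpha> \<gamma> k)" using rw_ge1 by simp
    then show "cmod (fcoeff g k) \<le> sqrt (rw \<alpha> \<gamma> k) * cmod (fcoeff g k)"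
      using mult_right_mono[of 1 "sqrt (rw \<alpha> \<gamma> k)" "cmod (fcoeff g k)"] by simp
  qed simp
  show "\<And>y. y \<in> unit_cube \<Longrightarrow> g y = (\<Sum>\<^sub>\<infinity>k. fcoeff g k * omega k y)"
    using g unfolding wiener_space_def by auto
  show as: "\<And>y. (\<lambda>k. norm (fcoeff g k * omega k y)) summable_on UNIV"
    using s1 by (simp add: norm_mult)
  show "\<And>y. (\<lambda>k. fcoeff g k * omega k y) summable_on UNIV"
    using as abs_summable_summable by (metis (no_types))
  show "g absolutely_integrable_on unit_cube"
    using g unfolding wiener_space_def by auto
  fix y :: "real^'a" assume y: "y \<in> unit_cube"
  have "g y = (\<Sum>\<^sub>\<infinity>k. fcoeff g k * omega k y)"
    using g y unfolding wiener_space_def by auto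
  also have "norm \<dots> \<le> (\<Sum>\<^sub>\<infinity>k. norm (fcoeff g k * omega k y))"
    by (rule norm_infsum_bound[OF as])
  finally show "norm (g y) \<le> (\<Sum>\<^sub>\<infinity>k. cmod (fcoeff g k))"
    by (simp add: norm_mult)
qed

lemma rw_ge_factor: "r1 b (g j) (k $ j) \<le> rw b g k"
proof -
  have "rw b g k = r1 b (g j) (k $ j) * (\<Prod>i\<in>UNIV - {j}. r1 b (g i) (k $ i))"
    unfolding rw_def by (simp add: prod.remove)
  moreover have "1 \<le> (\<Prod>i\<in>UNIV - {j}. r1 b (g i) (k $ i))"
    by (rule prod_ge_1) (simp add: r1_ge1)
  moreover have "0 \<le> r1 b (g j) (k $ j)" using r1_ge1[of b "g j" "k $ j"] by simp
  ultimately show ?thesis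
    using mult_left_mono[of 1 _ "r1 b (g j) (k $ j)"] by simp
qed

lemma finite_box: "finite {k :: int^'n::finite. \<forall>j. \<bar>k $ j\<bar> \<le> M}"
proof -
  have "{k :: int^'n. \<forall>j. \<bar>k $ j\<bar> \<le> M} \<subseteq> vec_lambda ` (PiE UNIV (\<lambda>_. {-M..M}))"
  proof
    fix k :: "int^'n" assume "k \<in> {k. \<forall>j. \<bar>k $ j\<bar> \<le> M}"
    then have "(\<lambda>j. k $ j) \<in> PiE UNIV (\<lambda>_. {-M..M})" by (auto simp: abs_le_iff) (metis minus_le_iff)
    then show "k \<in> vec_lambda ` (PiE UNIV (\<lambda>_. {-M..M}))"
      by (metis image_eqI vec_lambda_eta)
  qed
  moreover have "finite (PiE (UNIV::'n set) (\<lambda>_. {-M..M}))" by (rule finite_PiE) auto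
  ultimately show ?thesis by (meson finite_imageI finite_subset)
qed

lemma hyp_cross_finite:
  assumes a: "\<alpha> \<ge> 1/2" and g1: "\<forall>j. \<gamma> j \<le> 1" and g0: "\<forall>j. 0 < \<gamma> j" and nu: "\<nu> \<ge> 1"
  shows "finite (hyp_cross \<alpha> \<nu> (\<gamma> :: 'n::finite \<Rightarrow> real))"
proof -
  have "hyp_cross \<alpha> \<nu> \<gamma> \<subseteq> {k :: int^'n. \<forall>j. \<bar>k $ j\<bar> \<le> \<lceil>\<nu>\<rceil>}"
  proof (clarify)
    fix k :: "int^'n" and j assume k: "k \<in> hyp_cross \<alpha> \<nu> \<gamma>"
    have "r1 \<alpha> (\<gamma> j) (k $ j) \<le> \<nu>" using k rw_ge_factor[of \<alpha> \<gamma> j k]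
      unfolding hyp_cross_def by simp
    then have h: "\<bar>real_of_int (k $ j)\<bar> powr (2 * \<alpha>) / \<gamma> j \<le> \<nu>" unfolding r1_def by simp
    have "\<bar>real_of_int (k $ j)\<bar> \<le> \<nu>"
    proof (cases "\<bar>real_of_int (k $ j)\<bar> \<ge> 1")
      case True
      have "\<bar>real_of_int (k $ j)\<bar> = \<bar>real_of_int (k $ j)\<bar> powr 1" using True by simp
      also have "\<dots> \<le> \<bar>real_of_int (k $ j)\<bar> powr (2 * \<alpha>)"
        by (rule powr_mono) (use True a in auto)
      also have "\<dots> \<le> \<bar>real_of_int (k $ j)\<bar> powr (2 * \<alpha>) / \<gamma> j"
        using g1 g0 by (simp add: le_divide_eq mult_left_le)
      finally show ?thesis using h by linarith
    next
      case False then show ?thesis using nu by linarith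
    qed
    then have "real_of_int \<bar>k $ j\<bar> \<le> \<nu>" by simp
    then show "\<bar>k $ j\<bar> \<le> \<lceil>\<nu>\<rceil>"
      by (metis ceiling_mono ceiling_of_int)
  qed
  then show ?thesis using finite_box finite_subset by blast
qed

lemma phi_check_bound: "norm (phi_check N c x k) \<le> mu_bar N c"
proof -
  have "norm (\<Sum>n=1..N. complex_of_real (c n) * omega k (x n)) \<le> (\<Sum>n=1..N. norm (complex_of_real (c n) * omega k (x n)))"
    by (rule norm_sum)
  also have "\<dots> = (\<Sum>n=1..N. \<bar>c n\<bar>)" by (simp add: norm_mult)
  finally have "norm (\<Sum>n=1..N. complex_of_real (c n) * omega k (x n)) \<le> (\<Sum>n=1..N. \<bar>c n\<bar>)" .
  moreover have "cmod (1 / of_nat N) = 1 / real N" by (simp add: norm_divide)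
  ultimately show ?thesis unfolding phi_check_def mu_bar_def norm_mult
    by (metis divide_nonneg_nonneg mult_left_mono of_nat_0_le_iff zero_le_one)
qed

lemma g_omega_int:
  assumes "g absolutely_integrable_on unit_cube"
  shows "(\<lambda>y. g y * cnj (omega k y)) absolutely_integrable_on unit_cube"
  apply (rule abs_int_mult_bounded[OF assms, of _ 1])
  unfolding omega_cnj by (auto intro: cont_omega)

lemma g_omega_int':
  assumes "g absolutely_integrable_on unit_cube"
  shows "(\<lambda>y. g y * cnj (omega k y)) integrable_on unit_cube"
  using g_omega_int[OF assms] absolutely_integrable_on_def by blast

lemma phiK_cont: "finite K \<Longrightarrow> continuous_on S (phiK K N c x)"
  unfolding phiK_def omega_cnj by (intro continuous_intros cont_omega) 

lemma phiK_bound: "norm (phiK K N c x y) \<le> (\<Sum>k\<in>K. norm (phi_check N c x k))"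
  unfolding phiK_def by (rule order_trans[OF norm_sum]) (simp add: norm_mult)

lemma integral_g_phiK:
  assumes g: "g absolutely_integrable_on unit_cube" and K: "finite K"
  shows "integral unit_cube (\<lambda>y. g y * phiK K N c x y) = (\<Sum>k\<in>K. phi_check N c x k * fcoeff g k)"
proof -
  have "integral unit_cube (\<lambda>y. g y * phiK K N c x y)
     = integral unit_cube (\<lambda>y. \<Sum>k\<in>K. phi_check N c x k * (g y * cnj (omega k y)))"
    unfolding phiK_def by (simp add: sum_distrib_left algebra_simps)
  also have "\<dots> = (\<Sum>k\<in>K. integral unit_cube (\<lambda>y. phi_check N c x k * (g y * cnj (omega k y))))"
    by (rule integral_sum[OF K]) (intro integrable_on_mult_right g_omega_int'[OF g])
  also have "\<dots> = (\<Sum>k\<in>K. phi_check N c x k * fcoeff g k)"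
    unfolding fcoeff_def by simp
  finally show ?thesis .
qed

lemma fcoeff_g_phiK:
  assumes g: "g absolutely_integrable_on unit_cube" and K: "finite K"
  shows "fcoeff (\<lambda>y. g y * phiK K N c x y) m = (\<Sum>k\<in>K. phi_check N c x k * fcoeff g (k + m))"
proof -
  have "fcoeff (\<lambda>y. g y * phiK K N c x y) m
     = integral unit_cube (\<lambda>y. \<Sum>k\<in>K. phi_check N c x k * (g y * cnj (omega (k + m) y)))"
    unfolding phiK_def fcoeff_def omega_add
    by (simp add: sum_distrib_left sum_distrib_right algebra_simps)
  also have "\<dots> = (\<Sum>k\<in>K. integral unit_cube (\<lambda>y. phi_check N c x k * (g y * cnj (omega (k + m) y))))"
    by (rule integral_sum[OF K]) (intro integrable_on_mult_right g_omega_int'[OF g])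
  also have "\<dots> = (\<Sum>k\<in>K. phi_check N c x k * fcoeff g (k + m))"
    unfolding fcoeff_def by simp
  finally show ?thesis .
qed

lemma qmc_series:
  assumes g: "g \<in> wiener_space \<alpha> \<gamma>" and xc: "\<forall>n\<in>{1..N}. x n \<in> unit_cube"
  shows "(1 / of_nat N) * (\<Sum>n=1..N. complex_of_real (c n) * g (x n))
       = (\<Sum>\<^sub>\<infinity>k. fcoeff g k * phi_check N c x k)"
proof -
  note W = wiener_facts[OF g]
  have "(\<Sum>n=1..N. complex_of_real (c n) * g (x n))
      = (\<Sum>n=1..N. (\<Sum>\<^sub>\<infinity>k. complex_of_real (c n) * (fcoeff g k * omega k (x n))))"
    by (rule sum.cong) (use xc W(3) in \<open>auto simp: infsum_cmult_right'\<close>)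
  also have "\<dots> = (\<Sum>\<^sub>\<infinity>k. \<Sum>n=1..N. complex_of_real (c n) * (fcoeff g k * omega k (x n)))"
    by (rule infsum_finsum[THEN conjunct2, symmetric]) (auto intro: summable_on_cmult_right W(5))
  finally have eq: "(\<Sum>n=1..N. complex_of_real (c n) * g (x n)) = (\<Sum>\<^sub>\<infinity>k. \<Sum>n=1..N. complex_of_real (c n) * (fcoeff g k * omega k (x n)))" .
  have "(1 / of_nat N) * (\<Sum>n=1..N. complex_of_real (c n) * g (x n))
     = (\<Sum>\<^sub>\<infinity>k. (1 / of_nat N) * (\<Sum>n=1..N. complex_of_real (c n) * (fcoeff g k * omega k (x n))))"
    by (simp only: eq) (rule infsum_cmult_right'[symmetric])
  also have "\<dots> = (\<Sum>\<^sub>\<infinity>k. fcoeff g k * phi_check N c x k)"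
    unfolding phi_check_def
    by (rule infsum_cong) (simp add: sum_distrib_left algebra_simps)
  finally show ?thesis .
qed

lemma err1_bound:
  assumes g: "g \<in> wiener_space \<alpha> \<gamma>" and xc: "\<forall>n\<in>{1..N}. x n \<in> unit_cube"
    and K: "K = hyp_cross \<alpha> \<nu> \<gamma>" "finite K" and nu: "\<nu> > 0"
  shows "err1 g K N c x \<le> wiener_norm \<alpha> \<gamma> g * mu_bar N c / sqrt \<nu>"
proof -
  note W = wiener_facts[OF g]
  define F where "F k = fcoeff g k * phi_check N c x k" for k
  define b where "b k = sqrt (rw \<alpha> \<gamma> k) * cmod (fcoeff g k)" for k
  have mu0: "0 \<le> mu_bar N c" unfolding mu_bar_def by (simp add: sum_nonneg)
  have nF: "norm (F k) \<le> cmod (fcoeff g k) * mu_bar N c" for k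
    unfolding F_def norm_mult by (rule mult_left_mono[OF phi_check_bound]) simp
  have Fs: "(\<lambda>k. norm (F k)) summable_on UNIV"
    by (rule summable_on_comparison_test[OF summable_on_cmult_left[OF W(1)]]) (use nF in auto)
  then have Fs': "F summable_on UNIV" using abs_summable_summable by blast
  have e: "err1 g K N c x = norm (infsum F (UNIV - K))"
    unfolding err1_def qmc_series[OF g xc] integral_g_phiK[OF W(7) K(2)]
    by (subst infsum_Diff[OF Fs']) (auto simp: K(2) F_def[abs_def] mult.commute)
  also have "\<dots> \<le> infsum (\<lambda>k. norm (F k)) (UNIV - K)"
    by (rule norm_infsum_bound) (rule summable_on_subset_banach[OF Fs], auto)
  also have "\<dots> \<le> infsum (\<lambda>k. b k * (mu_bar N c / sqrt \<nu>)) (UNIV - K)"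
  proof (rule infsum_mono)
    show "(\<lambda>k. norm (F k)) summable_on UNIV - K" by (rule summable_on_subset_banach[OF Fs], auto)
    show "(\<lambda>k. b k * (mu_bar N c / sqrt \<nu>)) summable_on UNIV - K"
      using summable_on_subset_banach[OF summable_on_cmult_left[OF W(2)], of "UNIV - K" "mu_bar N c / sqrt \<nu>"]
      by (simp add: b_def)
    fix k assume "k \<in> UNIV - K"
    then have r: "rw \<alpha> \<gamma> k > \<nu>" using K(1) unfolding hyp_cross_def by auto
    then have "sqrt \<nu> \<le> sqrt (rw \<alpha> \<gamma> k)" by simp
    then have "cmod (fcoeff g k) * sqrt \<nu> \<le> b k" unfolding b_def
      by (metis mult.commute mult_left_mono norm_ge_zero)
    then have "cmod (fcoeff g k) \<le> b k / sqrt \<nu>" using nu by (simp add: le_divide_eq)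
    then have "cmod (fcoeff g k) * mu_bar N c \<le> b k / sqrt \<nu> * mu_bar N c"
      by (rule mult_right_mono[OF _ mu0])
    then show "norm (F k) \<le> b k * (mu_bar N c / sqrt \<nu>)" using nF[of k] by simp
  qed
  also have "\<dots> = infsum b (UNIV - K) * (mu_bar N c / sqrt \<nu>)"
    by (rule infsum_cmult_left') 
  also have "\<dots> \<le> infsum b UNIV * (mu_bar N c / sqrt \<nu>)"
  proof (rule mult_right_mono)
    show "infsum b (UNIV - K) \<le> infsum b UNIV"
    proof (rule infsum_mono_neutral)
      have bs: "b summable_on UNIV" using W(2) by (simp add: b_def[abs_def])
      then show "b summable_on UNIV" .
      show "b summable_on UNIV - K" by (rule summable_on_subset_banach[OF bs]) auto
    qed (auto simp: b_def)
  qed (use mu0 nu in simp)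
  finally show ?thesis unfolding wiener_norm_def b_def by simp
qed



lemma r1_shift:
  fixes h k :: int
  assumes b: "0 < \<beta>" "\<beta> \<le> \<alpha>" and g: "0 < \<gamma>" "\<gamma> \<le> 1"
  shows "r1 \<beta> \<gamma> (h - k) \<le> max 1 (2 powr (2 * \<alpha>) * \<gamma>) * r1 \<beta> \<gamma> h * r1 \<beta> \<gamma> k"
proof -
  let ?P = "max 1 (2 powr (2 * \<alpha>) * \<gamma>)"
  have P1: "1 \<le> ?P" by simp
  have rh: "1 \<le> r1 \<beta> \<gamma> h" and rk: "1 \<le> r1 \<beta> \<gamma> k" by (simp_all add: r1_ge1)
  have one: "1 \<le> ?P * r1 \<beta> \<gamma> h * r1 \<beta> \<gamma> k"
  proof -
    have "1 * 1 \<le> ?P * r1 \<beta> \<gamma> h" by (rule mult_mono[OF P1 rh]) auto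
    then have "1 * 1 \<le> (?P * r1 \<beta> \<gamma> h) * r1 \<beta> \<gamma> k" by (intro mult_mono[OF _ rk]) auto
    then show ?thesis by simp
  qed
  show ?thesis
  proof (cases "h = 0 \<or> k = 0")
    case True
    then show ?thesis
    proof
      assume h: "h = 0"
      have "r1 \<beta> \<gamma> (h - k) = r1 \<beta> \<gamma> k" using h unfolding r1_def by simp
      moreover have "r1 \<beta> \<gamma> h = 1" using h b unfolding r1_def by simp
      ultimately show ?thesis using P1 rk by (simp add: mult_left_le)
    next
      assume k: "k = 0"
      have "r1 \<beta> \<gamma> k = 1" using k b unfolding r1_def by simp
      then show ?thesis using k P1 rh by (simp add: mult_le_cancel_right1)
    qed
  next
    case False
    define M where "M = max \<bar>real_of_int h\<bar> \<bar>real_of_int k\<bar>"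
    have h1: "1 \<le> \<bar>real_of_int h\<bar>" and k1: "1 \<le> \<bar>real_of_int k\<bar>" using False by auto
    have M1: "1 \<le> M" using h1 unfolding M_def by simp
    have A: "\<bar>real_of_int (h - k)\<bar> \<le> 2 * M" unfolding M_def by simp
    have "\<bar>real_of_int (h - k)\<bar> powr (2 * \<beta>) \<le> (2 * M) powr (2 * \<beta>)"
      by (rule powr_mono2) (use A b in auto)
    also have "\<dots> = 2 powr (2 * \<beta>) * M powr (2 * \<beta>)" using M1 by (simp add: powr_mult)
    also have "\<dots> \<le> 2 powr (2 * \<alpha>) * M powr (2 * \<beta>)"
      by (rule mult_right_mono) (use b in auto)
    finally have A2: "\<bar>real_of_int (h - k)\<bar> powr (2 * \<beta>) \<le> 2 powr (2 * \<alpha>) * M powr (2 * \<beta>)" .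
    have hp: "1 \<le> \<bar>real_of_int h\<bar> powr (2 * \<beta>)" using h1 b by (simp add: ge_one_powr_ge_zero)
    have kp: "1 \<le> \<bar>real_of_int k\<bar> powr (2 * \<beta>)" using k1 b by (simp add: ge_one_powr_ge_zero)
    have Mp: "M powr (2 * \<beta>) \<le> \<bar>real_of_int h\<bar> powr (2 * \<beta>) * \<bar>real_of_int k\<bar> powr (2 * \<beta>)"
    proof (cases "\<bar>real_of_int h\<bar> \<le> \<bar>real_of_int k\<bar>")
      case True
      then have "M = \<bar>real_of_int k\<bar>" unfolding M_def by simp
      moreover have "1 * \<bar>real_of_int k\<bar> powr (2 * \<beta>) \<le> \<bar>real_of_int h\<bar> powr (2 * \<beta>) * \<bar>real_of_int k\<bar> powr (2 * \<beta>)"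
        by (rule mult_right_mono[OF hp]) simp
      ultimately show ?thesis by simp
    next
      case False
      then have "M = \<bar>real_of_int h\<bar>" unfolding M_def by simp
      moreover have "\<bar>real_of_int h\<bar> powr (2 * \<beta>) * 1 \<le> \<bar>real_of_int h\<bar> powr (2 * \<beta>) * \<bar>real_of_int k\<bar> powr (2 * \<beta>)"
        by (rule mult_left_mono[OF kp]) simp
      ultimately show ?thesis by simp
    qed
    have rh': "\<bar>real_of_int h\<bar> powr (2 * \<beta>) / \<gamma> \<le> r1 \<beta> \<gamma> h" unfolding r1_def by simp
    have rk': "\<bar>real_of_int k\<bar> powr (2 * \<beta>) / \<gamma> \<le> r1 \<beta> \<gamma> k" unfolding r1_def by simp
    have "\<bar>real_of_int (h - k)\<bar> powr (2 * \<beta>) / \<gamma> \<le> 2 powr (2 * \<alpha>) * M powr (2 * \<beta>) / \<gamma>"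
      using A2 g by (simp add: divide_right_mono)
    also have "\<dots> = (2 powr (2 * \<alpha>) * \<gamma>) * (M powr (2 * \<beta>) / \<gamma> / \<gamma>)" using g by (simp add: field_simps)
    also have "\<dots> \<le> ?P * ((\<bar>real_of_int h\<bar> powr (2 * \<beta>) / \<gamma>) * (\<bar>real_of_int k\<bar> powr (2 * \<beta>) / \<gamma>))"
    proof (rule mult_mono)
      show "M powr (2 * \<beta>) / \<gamma> / \<gamma> \<le> \<bar>real_of_int h\<bar> powr (2 * \<beta>) / \<gamma> * (\<bar>real_of_int k\<bar> powr (2 * \<beta>) / \<gamma>)"
        using Mp g by (simp add: divide_right_mono)
    qed (use g in auto)
    also have "\<dots> \<le> ?P * (r1 \<beta> \<gamma> h * r1 \<beta> \<gamma> k)"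
      by (rule mult_left_mono[OF mult_mono[OF rh' rk']]) (use g rh rk in auto)
    finally have "\<bar>real_of_int (h - k)\<bar> powr (2 * \<beta>) / \<gamma> \<le> ?P * r1 \<beta> \<gamma> h * r1 \<beta> \<gamma> k"
      by (simp add: mult.assoc)
    then show ?thesis using one unfolding r1_def[of \<beta> \<gamma> "h - k"] by simp
  qed
qed

definition Pc :: "real \<Rightarrow> ('n::finite \<Rightarrow> real) \<Rightarrow> real" where
  "Pc \<alpha> \<gamma> = (\<Prod>j\<in>UNIV. max 1 (2 powr (2 * \<alpha>) * \<gamma> j))"

lemma rw_shift:
  assumes b: "0 < \<beta>" "\<beta> \<le> \<alpha>" and g: "\<forall>j. 0 < \<gamma> j" "\<forall>j. \<gamma> j \<le> 1"
  shows "rw \<beta> \<gamma> (h - k) \<le> Pc \<alpha> \<gamma> * rw \<beta> \<gamma> h * rw \<beta> \<gamma> k"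
proof -
  have "rw \<beta> \<gamma> (h - k) \<le> (\<Prod>j\<in>UNIV. max 1 (2 powr (2 * \<alpha>) * \<gamma> j) * r1 \<beta> (\<gamma> j) (h $ j) * r1 \<beta> (\<gamma> j) (k $ j))"
    unfolding rw_def
    by (rule prod_mono) (use r1_shift[OF b] g r1_ge1 in \<open>auto intro: order_trans[OF zero_le_one]\<close>)
  also have "\<dots> = Pc \<alpha> \<gamma> * rw \<beta> \<gamma> h * rw \<beta> \<gamma> k"
    unfolding Pc_def rw_def by (simp add: prod.distrib)
  finally show ?thesis .
qed

lemma Pc_ge1: "1 \<le> Pc \<alpha> \<gamma>" unfolding Pc_def by (rule prod_ge_1) simp

lemma c_const_Pc: "c_const \<alpha> \<gamma> = sqrt (Pc \<alpha> \<gamma>)" unfolding c_const_def Pc_def ..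

definition rho2 :: "real \<Rightarrow> int^'n::finite \<Rightarrow> real" where
  "rho2 \<delta> k = (\<Prod>j\<in>UNIV. (max 1 \<bar>real_of_int (k $ j)\<bar>) powr (-(1 + 2 * \<delta>)))"

lemma r1_ratio:
  assumes b: "0 < \<beta>" "2 * \<beta> = 2 * \<alpha> - (1 + 2 * \<delta>)" and g: "0 < \<gamma>" "\<gamma> \<le> 1" and a: "0 < \<alpha>"
  shows "r1 \<beta> \<gamma> t = (max 1 \<bar>real_of_int t\<bar>) powr (-(1 + 2 * \<delta>)) * r1 \<alpha> \<gamma> t"
proof (cases "t = 0")
  case True then show ?thesis unfolding r1_def by simp
next
  case False
  then have t1: "1 \<le> \<bar>real_of_int t\<bar>" by auto
  have e1: "1 \<le> \<bar>real_of_int t\<bar> powr (2 * \<beta>) / \<gamma>"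
    using g ge_one_powr_ge_zero[OF t1, of "2*\<beta>"] b by (simp add: le_divide_eq)
  have e2: "1 \<le> \<bar>real_of_int t\<bar> powr (2 * \<alpha>) / \<gamma>"
    using g ge_one_powr_ge_zero[OF t1, of "2*\<alpha>"] a by (simp add: le_divide_eq)
  have "r1 \<beta> \<gamma> t = \<bar>real_of_int t\<bar> powr (2 * \<beta>) / \<gamma>" unfolding r1_def using e1 by simp
  also have "\<dots> = \<bar>real_of_int t\<bar> powr (-(1 + 2 * \<delta>)) * (\<bar>real_of_int t\<bar> powr (2 * \<alpha>) / \<gamma>)"
  proof -
    have "2 * \<beta> = -(1 + 2 * \<delta>) + 2 * \<alpha>" using b(2) by simp
    then show ?thesis by (simp add: powr_add)
  qed
  also have "\<dots> = (max 1 \<bar>real_of_int t\<bar>) powr (-(1 + 2 * \<delta>)) * r1 \<alpha> \<gamma> t"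
    unfolding r1_def using e2 t1 by (simp add: max_def)
  finally show ?thesis .
qed

lemma rw_ratio:
  assumes b: "0 < \<beta>" "2 * \<beta> = 2 * \<alpha> - (1 + 2 * \<delta>)" and g: "\<forall>j. 0 < \<gamma> j" "\<forall>j. \<gamma> j \<le> 1" and a: "0 < \<alpha>"
  shows "rw \<beta> \<gamma> k = rho2 \<delta> k * rw \<alpha> \<gamma> k"
  unfolding rw_def rho2_def prod.distrib[symmetric]
  by (rule prod.cong[OF refl]) (rule r1_ratio[OF b _ _ a]; use g in auto)

lemma rho2_nonneg: "0 \<le> rho2 \<delta> k" unfolding rho2_def by (simp add: prod_nonneg)

lemma rho2_le1: assumes "0 \<le> \<delta>" shows "rho2 \<delta> k \<le> 1"
  unfolding rho2_def
proof (rule prod_le_1)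
  fix j
  have "max 1 \<bar>real_of_int (k $ j)\<bar> powr (-(1 + 2 * \<delta>)) \<le> max 1 \<bar>real_of_int (k $ j)\<bar> powr 0"
    by (rule powr_mono) (use assms in auto)
  moreover have "max 1 \<bar>real_of_int (k $ j)\<bar> powr 0 = 1" by simp
  ultimately show "0 \<le> max 1 \<bar>real_of_int (k $ j)\<bar> powr (-(1 + 2 * \<delta>)) \<and> max 1 \<bar>real_of_int (k $ j)\<bar> powr (-(1 + 2 * \<delta>)) \<le> 1"
    by (simp del: powr_zero_eq_one)
qed

lemma rzeta_summable:
  assumes "s > 1"
  shows "summable (\<lambda>n. 1 / real (Suc n) powr s)"
proof -
  have "summable (\<lambda>n. real n powr (- s))" using assms summable_real_powr_iff by simp
  then have "summable (\<lambda>n. real (Suc n) powr (- s))" by (subst summable_Suc_iff)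
  then show ?thesis by (simp add: powr_minus_divide)
qed

lemma rzeta_nonneg: "s > 1 \<Longrightarrow> 0 \<le> rzeta s"
  unfolding rzeta_def by (rule suminf_nonneg[OF rzeta_summable]) auto

definition wz :: "real \<Rightarrow> int \<Rightarrow> real" where
  "wz s t = (max 1 \<bar>real_of_int t\<bar>) powr (- s)"

lemma wz_nonneg: "0 \<le> wz s t" unfolding wz_def by simp

lemma wz_pos_sum:
  assumes s: "s > 1" and T: "finite T" "T \<subseteq> {0<..}"
  shows "sum (wz s) T \<le> rzeta s"
proof -
  define S where "S = {n. int (Suc n) \<in> T}"
  have TS: "T = (\<lambda>n. int (Suc n)) ` S"
  proof
    show "T \<subseteq> (\<lambda>n. int (Suc n)) ` S"
    proof
      fix t assume t: "t \<in> T"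
      then have "t > 0" using T by auto
      then have "t = int (Suc (nat t - 1))" by simp
      then show "t \<in> (\<lambda>n. int (Suc n)) ` S" using t unfolding S_def by (metis (mono_tags) image_eqI mem_Collect_eq)
    qed
  qed (auto simp: S_def)
  have inj: "inj_on (\<lambda>n. int (Suc n)) S" by (auto simp: inj_on_def)
  have fS: "finite S" using TS T(1) finite_imageD[OF _ inj] by simp
  have "sum (wz s) T = (\<Sum>n\<in>S. 1 / real (Suc n) powr s)"
    unfolding TS by (subst sum.reindex[OF inj]) (simp add: wz_def powr_minus_divide)
  also have "\<dots> \<le> rzeta s" unfolding rzeta_def
    by (rule sum_le_suminf[OF rzeta_summable[OF s] fS]) simp
  finally show ?thesis .
qed

lemma wz_sum:
  assumes s: "s > 1" and T: "finite T"
  shows "sum (wz s) T \<le> 1 + 2 * rzeta s"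
proof -
  have e1: "sum (wz s) T = sum (wz s) (T \<inter> {0<..}) + sum (wz s) (T - {0<..})"
    by (rule sum.Int_Diff[OF T])
  have e2: "sum (wz s) (T - {0<..}) = sum (wz s) ((T - {0<..}) \<inter> {..<0}) + sum (wz s) ((T - {0<..}) - {..<0})"
    by (rule sum.Int_Diff) (use T in simp)
  have p: "sum (wz s) (T \<inter> {0<..}) \<le> rzeta s" by (rule wz_pos_sum[OF s]) (use T in auto)
  have inj: "inj_on uminus ((T - {0<..}) \<inter> {..<0})" by (auto simp: inj_on_def)
  have "sum (wz s) ((T - {0<..}) \<inter> {..<0}) = sum (wz s) (uminus ` ((T - {0<..}) \<inter> {..<0}))"
    by (subst sum.reindex[OF inj]) (simp add: wz_def)
  also have "\<dots> \<le> rzeta s" by (rule wz_pos_sum[OF s]) (use T in auto)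
  finally have n: "sum (wz s) ((T - {0<..}) \<inter> {..<0}) \<le> rzeta s" .
  have "(T - {0<..}) - {..<0} \<subseteq> {0}" by auto
  then have "sum (wz s) ((T - {0<..}) - {..<0}) \<le> sum (wz s) {0}"
    by (intro sum_mono2) (auto simp: wz_nonneg)
  then have z: "sum (wz s) ((T - {0<..}) - {..<0}) \<le> 1" by (simp add: wz_def)
  show ?thesis using e1 e2 p n z by linarith
qed

lemma rho2_sum:
  assumes d: "0 < \<delta>" and K: "finite (K :: (int^'n::finite) set)"
  shows "sum (rho2 \<delta>) K \<le> (1 + 2 * rzeta (1 + 2 * \<delta>)) ^ CARD('n)"
proof -
  define s where "s = 1 + 2 * \<delta>"
  have s1: "s > 1" using d by (simp add: s_def)
  define M where "M = (\<Sum>k\<in>K. \<Sum>j\<in>UNIV. \<bar>k $ j\<bar>)"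
  define P where "P = PiE (UNIV :: 'n set) (\<lambda>_. {-M..M})"
  have Kb: "K \<subseteq> vec_lambda ` P"
  proof
    fix k assume k: "k \<in> K"
    have "\<bar>k $ j\<bar> \<le> M" for j
    proof -
      have "\<bar>k $ j\<bar> \<le> (\<Sum>j\<in>UNIV. \<bar>k $ j\<bar>)" by (rule member_le_sum) auto
      also have "\<dots> \<le> M" unfolding M_def by (rule member_le_sum[OF k]) (auto intro: sum_nonneg K)
      finally show ?thesis .
    qed
    then have "(\<lambda>j. k $ j) \<in> P" unfolding P_def by (auto simp: abs_le_iff) (metis minus_le_iff)
    then show "k \<in> vec_lambda ` P" by (metis image_eqI vec_lambda_eta)
  qed
  have fP: "finite P" unfolding P_def by (rule finite_PiE) auto
  have inj: "inj_on vec_lambda P" by (auto simp: inj_on_def vec_lambda_inject)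
  have "sum (rho2 \<delta>) K \<le> sum (rho2 \<delta>) (vec_lambda ` P)"
    by (rule sum_mono2[OF finite_imageI[OF fP] Kb]) (simp add: rho2_nonneg)
  also have "\<dots> = (\<Sum>f\<in>P. \<Prod>j\<in>UNIV. wz s (f j))"
    by (subst sum.reindex[OF inj]) (simp add: rho2_def wz_def s_def)
  also have "\<dots> = (\<Prod>j\<in>(UNIV::'n set). \<Sum>t\<in>{-M..M}. wz s t)"
    unfolding P_def by (rule prod_sum_PiE[symmetric]) auto
  also have "\<dots> \<le> (\<Prod>j\<in>(UNIV::'n set). 1 + 2 * rzeta s)"
    by (rule prod_mono) (use wz_sum[OF s1] in \<open>auto intro: sum_nonneg wz_nonneg\<close>)
  finally show ?thesis by (simp add: s_def)
qed

lemma zeta_const_sq: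
  assumes "0 < \<delta>"
  shows "(zeta_const \<delta> CARD('n::finite))^2 = (1 + 2 * rzeta (1 + 2 * \<delta>)) ^ CARD('n)"
    and "0 \<le> zeta_const \<delta> CARD('n::finite)"
proof -
  have p: "0 < 1 + 2 * rzeta (1 + 2 * \<delta>)" using rzeta_nonneg[of "1 + 2 * \<delta>"] assms by simp
  show "(zeta_const \<delta> CARD('n::finite))^2 = (1 + 2 * rzeta (1 + 2 * \<delta>)) ^ CARD('n)"
    unfolding zeta_const_def using p
    by (simp add: powr_powr[symmetric] powr_realpow[symmetric] power2_eq_square powr_add[symmetric])
  show "0 \<le> zeta_const \<delta> CARD('n::finite)" unfolding zeta_const_def by simp
qed



lemma cs_weighted:
  fixes s b :: "'a \<Rightarrow> real"
  assumes "\<And>k. k \<in> K \<Longrightarrow> 0 \<le> b k"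
  shows "(\<Sum>k\<in>K. s k * b k)^2 \<le> (\<Sum>k\<in>K. (s k)^2 * b k) * (\<Sum>k\<in>K. b k)"
proof -
  have "(\<Sum>k\<in>K. s k * b k) = (\<Sum>k\<in>K. (s k * sqrt (b k)) * sqrt (b k))"
    by (rule sum.cong) (use assms in \<open>auto simp: mult.assoc\<close>)
  also have "(\<dots>)^2 \<le> (\<Sum>k\<in>K. (s k * sqrt (b k))^2) * (\<Sum>k\<in>K. (sqrt (b k))^2)"
    by (rule Cauchy_Schwarz_ineq_sum)
  also have "\<dots> = (\<Sum>k\<in>K. (s k)^2 * b k) * (\<Sum>k\<in>K. b k)"
    using assms by (simp add: power_mult_distrib)
  finally show ?thesis .
qed

lemma fcoeff_scale: "fcoeff (\<lambda>y. a * f y) k = a * fcoeff f k"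
  unfolding fcoeff_def by (simp add: mult.assoc)

lemma korobov_scale:
  fixes f :: "real^'n::finite \<Rightarrow> complex"
  assumes f: "f \<in> korobov_space \<beta> \<gamma>"
  shows "(\<lambda>y. complex_of_real a * f y) \<in> korobov_space \<beta> \<gamma>"
    and "korobov_norm \<beta> \<gamma> (\<lambda>y. complex_of_real a * f y) = \<bar>a\<bar> * korobov_norm \<beta> \<gamma> f"
proof -
  have f1: "f absolutely_integrable_on unit_cube" and f2: "(\<lambda>x. (cmod (f x))^2) integrable_on unit_cube"
    and f3: "(\<lambda>k. rw \<beta> \<gamma> k * (cmod (fcoeff f k))^2) summable_on UNIV"
    and f4: "\<forall>x\<in>unit_cube. f x = (\<Sum>\<^sub>\<infinity>k. fcoeff f k * omega k x)"
    using f unfolding korobov_space_def by auto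
  have e: "rw \<beta> \<gamma> k * (cmod (fcoeff (\<lambda>y. complex_of_real a * f y) k))^2 = a^2 * (rw \<beta> \<gamma> k * (cmod (fcoeff f k))^2)" for k
    unfolding fcoeff_scale norm_mult by (simp add: power_mult_distrib)
  show "(\<lambda>y. complex_of_real a * f y) \<in> korobov_space \<beta> \<gamma>"
    unfolding korobov_space_def
  proof (intro CollectI conjI ballI)
    have "(\<lambda>y. f y * complex_of_real a) absolutely_integrable_on unit_cube"
      by (rule abs_int_mult_bounded[OF f1, of _ "\<bar>a\<bar>"]) auto
    then show "(\<lambda>y. complex_of_real a * f y) absolutely_integrable_on unit_cube" by (simp add: mult.commute)
    show "(\<lambda>x. (cmod (complex_of_real a * f x))^2) integrable_on (unit_cube :: (real^'n) set)"
      using integrable_on_mult_right[OF f2, of "a^2"] by (simp add: norm_mult power_mult_distrib)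
    show "(\<lambda>k. rw \<beta> \<gamma> k * (cmod (fcoeff (\<lambda>y. complex_of_real a * f y) k))^2) summable_on UNIV"
      unfolding e by (rule summable_on_cmult_right[OF f3])
    fix x :: "real^'n" assume "x \<in> unit_cube"
    then show "complex_of_real a * f x = (\<Sum>\<^sub>\<infinity>k. fcoeff (\<lambda>y. complex_of_real a * f y) k * omega k x)"
      using f4 unfolding fcoeff_scale by (simp add: infsum_cmult_right' mult.assoc)
  qed
  show "korobov_norm \<beta> \<gamma> (\<lambda>y. complex_of_real a * f y) = \<bar>a\<bar> * korobov_norm \<beta> \<gamma> f"
    unfolding korobov_norm_def e infsum_cmult_right' by (simp add: real_sqrt_mult)
qed

lemma err_from_wce:
  assumes f: "f \<in> korobov_space \<beta> \<gamma>" and R: "korobov_norm \<beta> \<gamma> f \<le> R"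
    and W: "wce \<beta> \<gamma> L z \<le> ereal W"
  shows "cmod (integral unit_cube f - (1 / of_nat L) * (\<Sum>l<L. f (z l))) \<le> R * W"
proof -
  define E where "E h = cmod (integral unit_cube h - (1 / of_nat L) * (\<Sum>l<L. h (z l)))" for h
  have main: "E f \<le> r * W" if r: "r > 0" "korobov_norm \<beta> \<gamma> f \<le> r" for r
  proof -
    define h where "h = (\<lambda>y. complex_of_real (1 / r) * f y)"
    have hk: "h \<in> korobov_space \<beta> \<gamma>" unfolding h_def by (rule korobov_scale(1)[OF f])
    have "korobov_norm \<beta> \<gamma> h = korobov_norm \<beta> \<gamma> f / r"
      unfolding h_def korobov_scale(2)[OF f] using r by simp
    then have "korobov_norm \<beta> \<gamma> h \<le> 1" using r by (simp add: divide_le_eq)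
    then have "ereal (E h) \<le> wce \<beta> \<gamma> L z"
      unfolding wce_def E_def using hk by (intro SUP_upper) auto
    then have Eh: "E h \<le> W" using W by (metis ereal_less_eq(3) order_trans)
    have "integral unit_cube h - (1 / of_nat L) * (\<Sum>l<L. h (z l))
        = (integral unit_cube f - (1 / of_nat L) * (\<Sum>l<L. f (z l))) / complex_of_real r"
      unfolding h_def by (simp add: sum_divide_distrib[symmetric] diff_divide_distrib)
    then have "E h = E f / r" unfolding E_def using r by (simp add: norm_divide)
    then show ?thesis using Eh r by (simp add: divide_le_eq mult.commute)
  qed
  show ?thesis
  proof (cases "R > 0")
    case True then show ?thesis using main[OF True R] unfolding E_def by simp
  next
    case False
    have kn: "0 \<le> korobov_norm \<beta> \<gamma> f" unfolding korobov_norm_def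
      by (simp add: infsum_nonneg)
    then have R0: "R = 0" using R False by simp
    have "E f \<le> e" if e: "e > 0" for e
    proof -
      have p: "e / (\<bar>W\<bar> + 1) > 0" using e by simp
      have "E f \<le> e / (\<bar>W\<bar> + 1) * W" by (rule main[OF p]) (use R R0 p in simp)
      also have "\<dots> \<le> e / (\<bar>W\<bar> + 1) * (\<bar>W\<bar> + 1)" by (rule mult_left_mono) (use p in auto)
      also have "\<dots> = e" by simp
      finally show ?thesis .
    qed
    then have "E f \<le> 0" by (meson dense not_le)
    then show ?thesis using R0 unfolding E_def by simp
  qed
qed



lemma bij_shift: "bij_betw (\<lambda>m. k + m) UNIV (UNIV :: (int^'n::finite) set)"
  by (rule bij_betwI[where g="\<lambda>m. m - k"]) auto

lemma shift_summable:
  fixes F :: "int^'n::finite \<Rightarrow> 'b::{topological_comm_monoid_add}"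
  assumes "F summable_on UNIV"
  shows "(\<lambda>m. F (k + m)) summable_on UNIV"
  using summable_on_reindex_bij_betw[OF bij_shift, of F k] assms by simp

lemma shift_infsum:
  fixes F :: "int^'n::finite \<Rightarrow> 'b::{topological_comm_monoid_add,t2_space}"
  shows "infsum (\<lambda>m. F (k + m)) UNIV = infsum F UNIV"
  using infsum_reindex_bij_betw[OF bij_shift, of F k] by simp

lemma sq_int_prod:
  fixes g :: "real^'n::finite \<Rightarrow> complex"
  assumes g: "g \<in> wiener_space \<alpha> \<gamma>" and K: "finite K"
  shows "(\<lambda>y. g y * phiK K N c x y) absolutely_integrable_on unit_cube"
    and "(\<lambda>y. (cmod (g y * phiK K N c x y))^2) integrable_on (unit_cube :: (real^'n) set)"
proof -
  note W = wiener_facts[OF g]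
  define f where "f = (\<lambda>y. g y * phiK K N c x y)"
  show fa: "(\<lambda>y. g y * phiK K N c x y) absolutely_integrable_on unit_cube"
    by (rule abs_int_mult_bounded[OF W(7) phiK_cont[OF K] phiK_bound])
  define G where "G = (\<Sum>\<^sub>\<infinity>k. cmod (fcoeff g k)) * (\<Sum>k\<in>K. norm (phi_check N c x k))"
  have fb: "norm (f y) \<le> G" if "y \<in> unit_cube" for y
    unfolding f_def G_def norm_mult
    by (rule mult_mono[OF W(6)[OF that] phiK_bound]) (auto intro: infsum_nonneg)
  have fm: "f \<in> borel_measurable (lebesgue_on unit_cube)"
    using fa absolutely_integrable_measurable[OF cube_leb] unfolding f_def by blast
  have m0: "(\<lambda>y. cmod (f y)) \<in> borel_measurable (lebesgue_on unit_cube)"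
    using measurable_compose[OF fm borel_measurable_norm] by (simp add: comp_def)
  have m1: "(\<lambda>y. (cmod (f y))^2) \<in> borel_measurable (lebesgue_on unit_cube)"
    by (rule borel_measurable_power[OF m0])
  have "(\<lambda>y. cmod (f y)) integrable_on unit_cube"
    using fa unfolding f_def absolutely_integrable_on_def by blast
  then have m2: "(\<lambda>y. G * cmod (f y)) integrable_on unit_cube"
    by (rule integrable_on_mult_right)
  have m3: "norm ((cmod (f y))^2) \<le> G * cmod (f y)" if "y \<in> unit_cube" for y
  proof -
    have "cmod (f y) * cmod (f y) \<le> G * cmod (f y)" by (rule mult_right_mono[OF fb[OF that]]) simp
    then show ?thesis by (simp add: power2_eq_square)
  qed
  have "(\<lambda>y. (cmod (f y))^2) integrable_on unit_cube"
    by (rule measurable_bounded_by_integrable_imp_integrable[OF m1 m2 m3 cube_leb])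
  then show "(\<lambda>y. (cmod (g y * phiK K N c x y))^2) integrable_on (unit_cube :: (real^'n) set)"
    unfolding f_def .
qed

lemma fourier_prod:
  fixes g :: "real^'n::finite \<Rightarrow> complex"
  assumes g: "g \<in> wiener_space \<alpha> \<gamma>" and K: "finite K" and y: "y \<in> unit_cube"
  shows "g y * phiK K N c x y = (\<Sum>\<^sub>\<infinity>m. (\<Sum>k\<in>K. phi_check N c x k * fcoeff g (k + m)) * omega m y)"

proof -
  note W = wiener_facts[OF g]
  define H where "H k h = fcoeff g h * omega h y * cnj (omega k y)" for k h
  have Hs: "H k summable_on UNIV" for k unfolding H_def by (rule summable_on_cmult_left[OF W(5)])
  have Hk: "H k (k + m) = fcoeff g (k + m) * omega m y" for k m
  proof -
    have "omega k y * cnj (omega k y) = 1" using complex_norm_square[of "omega k y"] by simp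
    then show ?thesis unfolding H_def omega_add by (simp add: algebra_simps)
  qed
  have inner: "(\<Sum>\<^sub>\<infinity>m. fcoeff g (k + m) * omega m y) = g y * cnj (omega k y)" for k
  proof -
    have "(\<Sum>\<^sub>\<infinity>m. fcoeff g (k + m) * omega m y) = (\<Sum>\<^sub>\<infinity>m. H k (k + m))" by (simp add: Hk)
    also have "\<dots> = infsum (H k) UNIV" by (rule shift_infsum)
    also have "\<dots> = g y * cnj (omega k y)" unfolding H_def W(3)[OF y]
      by (rule infsum_cmult_left')
    finally show ?thesis .
  qed
  have sm: "(\<lambda>m. phi_check N c x k * (fcoeff g (k + m) * omega m y)) summable_on UNIV" for k
    by (rule summable_on_cmult_right) (use shift_summable[OF Hs, of k k] Hk in simp)
  have "(\<Sum>\<^sub>\<infinity>m. (\<Sum>k\<in>K. phi_check N c x k * fcoeff g (k + m)) * omega m y)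
      = (\<Sum>\<^sub>\<infinity>m. \<Sum>k\<in>K. phi_check N c x k * (fcoeff g (k + m) * omega m y))"
    by (simp add: sum_distrib_right mult.assoc)
  also have "\<dots> = (\<Sum>k\<in>K. \<Sum>\<^sub>\<infinity>m. phi_check N c x k * (fcoeff g (k + m) * omega m y))"
    by (rule infsum_finsum[OF K sm, THEN conjunct2])
  also have "\<dots> = (\<Sum>k\<in>K. phi_check N c x k * (g y * cnj (omega k y)))"
    by (simp add: infsum_cmult_right' inner)
  also have "\<dots> = g y * phiK K N c x y" unfolding phiK_def by (simp add: sum_distrib_left algebra_simps)
  finally show ?thesis by simp
qed



lemma coeff_bound:
  fixes g :: "real^'n::finite \<Rightarrow> complex" and \<gamma> :: "'n \<Rightarrow> real"
    and N :: nat and c :: "nat \<Rightarrow> real" and x :: "nat \<Rightarrow> real^'n"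
  assumes g: "g \<in> wiener_space \<alpha> \<gamma>" and K: "K = hyp_cross \<alpha> \<nu> \<gamma>" "finite K"
    and b: "0 < \<beta>" "2 * \<beta> = 2 * \<alpha> - (1 + 2 * \<delta>)" "0 < \<delta>"
    and gam: "\<forall>j. 0 < \<gamma> j" "\<forall>j. \<gamma> j \<le> 1" and a: "0 < \<alpha>" and nu: "0 < \<nu>"
  defines "fh \<equiv> (\<lambda>m. \<Sum>k\<in>K. phi_check N c x k * fcoeff g (k + m))"
  shows "(\<lambda>m. rw \<beta> \<gamma> m * (cmod (fh m))^2) summable_on UNIV"
    and "(\<Sum>\<^sub>\<infinity>m. rw \<beta> \<gamma> m * (cmod (fh m))^2)
          \<le> (mu_bar N c * c_const \<alpha> \<gamma> * sqrt \<nu> * wiener_norm \<alpha> \<gamma> g * zeta_const \<delta> CARD('n))^2"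
proof -
  note W = wiener_facts[OF g]
  define bb where "bb h = sqrt (rw \<alpha> \<gamma> h) * cmod (fcoeff g h)" for h
  define B where "B = infsum bb UNIV"
  define mu where "mu = mu_bar N c"
  define P where "P = Pc \<alpha> \<gamma>"
  define Gm where "Gm m = (\<Sum>k\<in>K. rho2 \<delta> k * bb (k + m))" for m
  have bbs: "bb summable_on UNIV" using W(2) by (simp add: bb_def[abs_def])
  have bb0: "0 \<le> bb h" for h unfolding bb_def by simp
  have B0: "0 \<le> B" unfolding B_def by (rule infsum_nonneg) (simp add: bb0)
  have mu0: "0 \<le> mu" unfolding mu_def mu_bar_def by (simp add: sum_nonneg)
  have P1: "1 \<le> P" unfolding P_def by (rule Pc_ge1)
  have ab: "\<beta> \<le> \<alpha>" using b by simp
  have ratio: "rw \<beta> \<gamma> k = rho2 \<delta> k * rw \<alpha> \<gamma> k" for k by (rule rw_ratio[OF b(1,2) gam a])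
  have sumB: "(\<Sum>k\<in>K. bb (k + m)) \<le> B" for m
  proof -
    have inj: "inj_on (\<lambda>k. k + m) K" by (auto simp: inj_on_def)
    have "(\<Sum>k\<in>K. bb (k + m)) = sum bb ((\<lambda>k. k + m) ` K)" by (simp add: sum.reindex[OF inj])
    also have "\<dots> \<le> B" unfolding B_def
      by (rule finite_sum_le_infsum[OF bbs]) (use K(2) bb0 in auto)
    finally show ?thesis .
  qed
  have pw: "rw \<beta> \<gamma> m * (cmod (fh m))^2 \<le> (mu^2 * P * \<nu> * B) * Gm m" for m
  proof -
    have n1: "cmod (fh m) \<le> mu * (\<Sum>k\<in>K. cmod (fcoeff g (k + m)))"
    proof -
      have "cmod (fh m) \<le> (\<Sum>k\<in>K. cmod (phi_check N c x k) * cmod (fcoeff g (k + m)))"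
        unfolding fh_def by (rule order_trans[OF norm_sum]) (simp add: norm_mult)
      also have "\<dots> \<le> (\<Sum>k\<in>K. mu * cmod (fcoeff g (k + m)))"
        by (rule sum_mono, rule mult_right_mono) (auto simp: mu_def phi_check_bound)
      finally show ?thesis by (simp add: sum_distrib_left)
    qed
    have sq: "sqrt (rw \<beta> \<gamma> m) * cmod (fcoeff g (k + m)) \<le> sqrt P * sqrt \<nu> * (sqrt (rho2 \<delta> k) * bb (k + m))"
      if k: "k \<in> K" for k
    proof -
      have "rw \<beta> \<gamma> m = rw \<beta> \<gamma> ((k + m) - k)" by simp
      also have "\<dots> \<le> P * rw \<beta> \<gamma> (k + m) * rw \<beta> \<gamma> k" unfolding P_def by (rule rw_shift[OF b(1) ab gam])
      also have "\<dots> \<le> P * rw \<alpha> \<gamma> (k + m) * (rho2 \<delta> k * \<nu>)"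
      proof (rule mult_mono)
        have "rw \<beta> \<gamma> (k + m) \<le> rw \<alpha> \<gamma> (k + m)"
          unfolding ratio[of "k + m"] using rho2_le1[of \<delta> "k + m"] b(3)
          by (simp add: mult_le_cancel_right1)
        then show "P * rw \<beta> \<gamma> (k + m) \<le> P * rw \<alpha> \<gamma> (k + m)" using P1 by simp
        have "rw \<alpha> \<gamma> k \<le> \<nu>" using k K(1) unfolding hyp_cross_def by simp
        then show "rw \<beta> \<gamma> k \<le> rho2 \<delta> k * \<nu>" unfolding ratio[of k]
          by (simp add: mult_left_mono rho2_nonneg)
      qed (use P1 rho2_nonneg in auto)
      finally have "rw \<beta> \<gamma> m \<le> P * \<nu> * rho2 \<delta> k * rw \<alpha> \<gamma> (k + m)" by (simp add: algebra_simps)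
      then have "sqrt (rw \<beta> \<gamma> m) \<le> sqrt P * sqrt \<nu> * sqrt (rho2 \<delta> k) * sqrt (rw \<alpha> \<gamma> (k + m))"
        by (metis real_sqrt_le_mono real_sqrt_mult)
      then show ?thesis unfolding bb_def
        by (metis mult.assoc mult_right_mono norm_ge_zero)
    qed
    have s1: "sqrt (rw \<beta> \<gamma> m) * cmod (fh m) \<le> mu * (sqrt P * sqrt \<nu> * (\<Sum>k\<in>K. sqrt (rho2 \<delta> k) * bb (k + m)))"
    proof -
      have "sqrt (rw \<beta> \<gamma> m) * cmod (fh m) \<le> sqrt (rw \<beta> \<gamma> m) * (mu * (\<Sum>k\<in>K. cmod (fcoeff g (k + m))))"
        by (rule mult_left_mono[OF n1]) simp
      also have "\<dots> = mu * (\<Sum>k\<in>K. sqrt (rw \<beta> \<gamma> m) * cmod (fcoeff g (k + m)))"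
        by (simp add: sum_distrib_left algebra_simps)
      also have "\<dots> \<le> mu * (\<Sum>k\<in>K. sqrt P * sqrt \<nu> * (sqrt (rho2 \<delta> k) * bb (k + m)))"
        by (rule mult_left_mono[OF sum_mono[OF sq] mu0])
      finally show ?thesis by (simp add: sum_distrib_left)
    qed
    have s0: "0 \<le> sqrt (rw \<beta> \<gamma> m) * cmod (fh m)" by simp
    have "rw \<beta> \<gamma> m * (cmod (fh m))^2 = (sqrt (rw \<beta> \<gamma> m) * cmod (fh m))^2"
      by (simp add: power_mult_distrib)
    also have "\<dots> \<le> (mu * (sqrt P * sqrt \<nu> * (\<Sum>k\<in>K. sqrt (rho2 \<delta> k) * bb (k + m))))^2"
      by (rule power_mono[OF s1 s0])
    also have "\<dots> = mu^2 * P * \<nu> * (\<Sum>k\<in>K. sqrt (rho2 \<delta> k) * bb (k + m))^2"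
      using P1 nu by (simp add: power_mult_distrib)
    also have "\<dots> \<le> mu^2 * P * \<nu> * (Gm m * B)"
    proof (rule mult_left_mono)
      have "(\<Sum>k\<in>K. sqrt (rho2 \<delta> k) * bb (k + m))^2 \<le> (\<Sum>k\<in>K. (sqrt (rho2 \<delta> k))^2 * bb (k + m)) * (\<Sum>k\<in>K. bb (k + m))"
        by (rule cs_weighted) (simp add: bb0)
      also have "\<dots> \<le> Gm m * B"
      proof -
        have e: "(\<Sum>k\<in>K. (sqrt (rho2 \<delta> k))^2 * bb (k + m)) = Gm m"
          unfolding Gm_def by (rule sum.cong) (simp_all add: rho2_nonneg)
        have "0 \<le> Gm m" unfolding Gm_def using rho2_nonneg bb0 by (auto intro!: sum_nonneg mult_nonneg_nonneg)
        then show ?thesis unfolding e by (rule mult_left_mono[OF sumB])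
      qed
      finally show "(\<Sum>k\<in>K. sqrt (rho2 \<delta> k) * bb (k + m))^2 \<le> Gm m * B" .
    qed (use P1 nu in auto)
    finally show ?thesis by (simp add: algebra_simps)
  qed
  have Gparts: "(\<lambda>m. rho2 \<delta> k * bb (k + m)) summable_on UNIV" for k
    by (rule summable_on_cmult_right[OF shift_summable[OF bbs]])
  have GS: "Gm summable_on UNIV" and GI: "infsum Gm UNIV = (\<Sum>k\<in>K. rho2 \<delta> k * B)"
    using infsum_finsum[OF K(2) Gparts] unfolding Gm_def[abs_def]
    by (auto simp: infsum_cmult_right' shift_infsum B_def)
  have Cs: "(\<lambda>m. (mu^2 * P * \<nu> * B) * Gm m) summable_on UNIV"
    by (rule summable_on_cmult_right[OF GS])
  show S: "(\<lambda>m. rw \<beta> \<gamma> m * (cmod (fh m))^2) summable_on UNIV"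
    by (rule summable_on_comparison_test[OF Cs pw]) simp
  have "(\<Sum>\<^sub>\<infinity>m. rw \<beta> \<gamma> m * (cmod (fh m))^2) \<le> (\<Sum>\<^sub>\<infinity>m. (mu^2 * P * \<nu> * B) * Gm m)"
    by (rule infsum_mono[OF S Cs pw])
  also have "\<dots> = (mu^2 * P * \<nu> * B) * (sum (rho2 \<delta>) K * B)"
    by (simp add: infsum_cmult_right' GI sum_distrib_right)
  also have "\<dots> \<le> (mu^2 * P * \<nu> * B) * ((zeta_const \<delta> CARD('n))^2 * B)"
  proof (rule mult_left_mono)
    show "sum (rho2 \<delta>) K * B \<le> (zeta_const \<delta> CARD('n))^2 * B"
      unfolding zeta_const_sq(1)[OF b(3)] by (rule mult_right_mono[OF rho2_sum[OF b(3) K(2)] B0])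
  qed (use P1 nu B0 mu0 in auto)
  also have "\<dots> = (mu_bar N c * c_const \<alpha> \<gamma> * sqrt \<nu> * wiener_norm \<alpha> \<gamma> g * zeta_const \<delta> CARD('n))^2"
    unfolding c_const_Pc mu_def P_def B_def bb_def wiener_norm_def
    using P1 nu by (simp add: power_mult_distrib power2_eq_square algebra_simps flip: P_def)
  finally show "(\<Sum>\<^sub>\<infinity>m. rw \<beta> \<gamma> m * (cmod (fh m))^2)
          \<le> (mu_bar N c * c_const \<alpha> \<gamma> * sqrt \<nu> * wiener_norm \<alpha> \<gamma> g * zeta_const \<delta> CARD('n))^2" .
qed



theorem theorem3p8:
  fixes \<gamma> :: "'n::{finite,linorder} \<Rightarrow> real"
    and \<alpha> \<delta> \<tau> :: real
    and g :: "(real, 'n) vec \<Rightarrow> complex"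
    and N :: nat and x :: "nat \<Rightarrow> (real, 'n) vec" and c :: "nat \<Rightarrow> real"
    and L :: nat and gv :: "(nat, 'n) vec"
  assumes "\<alpha> > 1" and "0 < \<delta>" and "\<delta> < \<alpha> - 1"
    and "0 < \<tau>" and "\<tau> \<le> \<alpha> - 1 - \<delta>"
    and "\<forall>j. \<gamma> j \<le> 1" and "\<forall>j. 0 < \<gamma> j" and "\<forall>i j. i \<le> j \<longrightarrow> \<gamma> j \<le> \<gamma> i"
    and "g \<in> wiener_space \<alpha> \<gamma>"
    and "N \<ge> 1" and "\<forall>n\<in>{1..N}. x n \<in> unit_cube"
    and "prime L" and "\<forall>j. 1 \<le> gv $ j \<and> gv $ j \<le> L - 1"
    and "\<forall>\<tau>'. 0 < \<tau>' \<and> \<tau>' \<le> (\<alpha> - 1/2 - \<delta>) - 1/2 \<longrightarrow>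
          wce (\<alpha> - 1/2 - \<delta>) \<gamma> L (lattice_pt L gv)
            \<le> ereal (Cconst \<gamma> (\<alpha> - 1/2 - \<delta>) \<tau>' * real L powr (- (\<alpha> - 1/2 - \<delta>) + \<tau>'))"
  shows "\<forall>\<nu>>1. let K = hyp_cross \<alpha> \<nu> \<gamma>; z = lattice_pt L gv in
     cmod ((1 / of_nat N) * (\<Sum>n=1..N. complex_of_real (c n) * g (x n))
           - (1 / of_nat L) * (\<Sum>l<L. g (z l) * phiK K N c x (z l)))
       \<le> err1 g K N c x + err2 g K N c x L z
     \<and> err1 g K N c x + err2 g K N c x L z
       \<le> wiener_norm \<alpha> \<gamma> g *
          (1 / sqrt \<nu> + sqrt \<nu> / real L powr (\<alpha> - 1/2 - \<delta> - \<tau>) * c_const \<alpha> \<gamma>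
             * zeta_const \<delta> (card (UNIV :: 'n set)) * Cconst \<gamma> (\<alpha> - 1/2 - \<delta>) \<tau>) * mu_bar N c"
proof (intro allI impI)
  fix \<nu> :: real assume nu: "\<nu> > 1"
  note A = assms
  define K where "K = hyp_cross \<alpha> \<nu> \<gamma>"
  define z where "z = lattice_pt L gv"
  define \<beta> where "\<beta> = \<alpha> - 1/2 - \<delta>"
  have Kf: "finite K" unfolding K_def by (rule hyp_cross_finite) (use A nu in auto)
  note W = wiener_facts[OF A(9)]
  define f where "f = (\<lambda>y. g y * phiK K N c x y)"
  define Wn where "Wn = wiener_norm \<alpha> \<gamma> g"
  define mu where "mu = mu_bar N c"
  define cc where "cc = c_const \<alpha> \<gamma>"
  define ze where "ze = zeta_const \<delta> CARD('n)"
  define R where "R = mu * cc * sqrt \<nu> * Wn * ze"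
  define CC where "CC = Cconst \<gamma> \<beta> \<tau>"
  have b0: "0 < \<beta>" "2 * \<beta> = 2 * \<alpha> - (1 + 2 * \<delta>)" using A unfolding \<beta>_def by auto
  have fc: "fcoeff f m = (\<Sum>k\<in>K. phi_check N c x k * fcoeff g (k + m))" for m
    unfolding f_def by (rule fcoeff_g_phiK[OF W(7) Kf])
  note CB = coeff_bound[OF A(9) K_def Kf b0 A(2) A(7) A(6) _ _, of N c x]
  have fk: "f \<in> korobov_space \<beta> \<gamma>"
    unfolding korobov_space_def
  proof (intro CollectI conjI ballI)
    show "f absolutely_integrable_on unit_cube" unfolding f_def by (rule sq_int_prod(1)[OF A(9) Kf])
    show "(\<lambda>x. (cmod (f x))^2) integrable_on (unit_cube :: (real^'n::{finite,linorder}) set)" unfolding f_def by (rule sq_int_prod(2)[OF A(9) Kf])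
    show "(\<lambda>k. rw \<beta> \<gamma> k * (cmod (fcoeff f k))^2) summable_on UNIV"
      unfolding fc using CB(1) A nu by simp
    fix y :: "real^'n::{finite,linorder}" assume "y \<in> unit_cube"
    then show "f y = (\<Sum>\<^sub>\<infinity>k. fcoeff f k * omega k y)"
      unfolding fc unfolding f_def by (rule fourier_prod[OF A(9) Kf])
  qed
  have "0 \<le> mu" unfolding mu_def mu_bar_def by (simp add: sum_nonneg)
  moreover have "0 \<le> cc" unfolding cc_def c_const_def by (simp add: prod_nonneg)
  moreover have "0 \<le> Wn" unfolding Wn_def wiener_norm_def by (simp add: infsum_nonneg)
  moreover have "0 \<le> ze" unfolding ze_def zeta_const_def by simp
  ultimately have R0: "0 \<le> R" unfolding R_def using nu by simp
  have "(\<Sum>\<^sub>\<infinity>k. rw \<beta> \<gamma> k * (cmod (fcoeff f k))^2) \<le> R^2"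
    unfolding fc R_def mu_def cc_def Wn_def ze_def using CB(2) A nu by simp
  then have kn: "korobov_norm \<beta> \<gamma> f \<le> R" unfolding korobov_norm_def
    using R0 real_sqrt_le_mono by fastforce
  have wc: "wce \<beta> \<gamma> L z \<le> ereal (CC * real L powr (- \<beta> + \<tau>))"
    using A(14) A(4,5) unfolding z_def CC_def \<beta>_def by auto
  have e2: "err2 g K N c x L z \<le> R * (CC * real L powr (- \<beta> + \<tau>))"
    unfolding err2_def using err_from_wce[OF fk kn wc] unfolding f_def .
  have e1: "err1 g K N c x \<le> Wn * mu / sqrt \<nu>"
    unfolding Wn_def mu_def by (rule err1_bound[OF A(9) A(11) K_def Kf]) (use nu in simp)
  have Lp: "real L powr (- \<beta> + \<tau>) = 1 / real L powr (\<beta> - \<tau>)"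
    by (simp add: powr_minus_divide[symmetric])
  show "let K = hyp_cross \<alpha> \<nu> \<gamma>; z = lattice_pt L gv in
     cmod ((1 / of_nat N) * (\<Sum>n=1..N. complex_of_real (c n) * g (x n))
           - (1 / of_nat L) * (\<Sum>l<L. g (z l) * phiK K N c x (z l)))
       \<le> err1 g K N c x + err2 g K N c x L z
     \<and> err1 g K N c x + err2 g K N c x L z
       \<le> wiener_norm \<alpha> \<gamma> g *
          (1 / sqrt \<nu> + sqrt \<nu> / real L powr (\<alpha> - 1/2 - \<delta> - \<tau>) * c_const \<alpha> \<gamma>
             * zeta_const \<delta> (card (UNIV :: 'n set)) * Cconst \<gamma> (\<alpha> - 1/2 - \<delta>) \<tau>) * mu_bar N c"
    unfolding Let_def K_def[symmetric] z_def[symmetric]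
  proof
    show "cmod ((1 / of_nat N) * (\<Sum>n=1..N. complex_of_real (c n) * g (x n))
           - (1 / of_nat L) * (\<Sum>l<L. g (z l) * phiK K N c x (z l)))
       \<le> err1 g K N c x + err2 g K N c x L z"
      unfolding err1_def err2_def
      by (rule norm_diff_triangle_le[where y="integral unit_cube (\<lambda>y. g y * phiK K N c x y)"]) simp_all
    have "err1 g K N c x + err2 g K N c x L z \<le> Wn * mu / sqrt \<nu> + R * (CC * real L powr (- \<beta> + \<tau>))"
      using e1 e2 by linarith
    also have "\<dots> = wiener_norm \<alpha> \<gamma> g *
          (1 / sqrt \<nu> + sqrt \<nu> / real L powr (\<alpha> - 1/2 - \<delta> - \<tau>) * c_const \<alpha> \<gamma>
             * zeta_const \<delta> (card (UNIV :: 'n set)) * Cconst \<gamma> (\<alpha> - 1/2 - \<delta>) \<tau>) * mu_bar N c"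
      unfolding Lp unfolding R_def Wn_def mu_def cc_def ze_def CC_def \<beta>_def by (simp add: field_simps)
    finally show "err1 g K N c x + err2 g K N c x L z \<le> wiener_norm \<alpha> \<gamma> g *
          (1 / sqrt \<nu> + sqrt \<nu> / real L powr (\<alpha> - 1/2 - \<delta> - \<tau>) * c_const \<alpha> \<gamma>
             * zeta_const \<delta> (card (UNIV :: 'n set)) * Cconst \<gamma> (\<alpha> - 1/2 - \<delta>) \<tau>) * mu_bar N c" .
  qed
qed

end
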